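(* Let $n\ge 1$, $A_0\in\mathbb{R}^{n\times n}$, $E_0\in\mathbb{R}^{n\times 1}$ and $C_0\in\mathbb{R}^{1\times n}$, and suppose the pair $(A_0,C_0)$ is observable. Then the following two statements are equivalent: (1) $\operatorname{rank}\begin{bmatrix} A_0-zI_n & E_0\\ C_0 & 0\end{bmatrix}=n+1$ for all $z\in\mathbb{C}$ (i.e., the triple $(A_0,E_0,C_0)$ has no invariant zeros); (2) $C_0E_0=0,\ C_0A_0E_0=0,\ \dots,\ C_0A_0^{n-2}E_0=0$ and $C_0A_0^{n-1}E_0\neq 0$.
   Context: These matrices describe the single-input single-output discrete-time system $x(k+1)=A_0x(k)+B_0u(k)+E_0f(k)$, $y(k)=C_0x(k)$, with state $x(k)\in\mathbb{R}^n$, known input $u(k)\in\mathbb{R}$, unknown scalar input (total disturbance) $f(k)\in\mathbb{R}$ and output $y(k)\in\mathbb{R}$. A number $z\in\mathbb{C}$ is an invariant zero of $(A_0,E_0,C_0)$ if $\operatorname{rank}\begin{bmatrix} A_0-zI_n & E_0\\ C_0 & 0\end{bmatrix}<n+1$. *)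

theory Defs
  imports "Jordan_Normal_Form.DL_Rank" "Jordan_Normal_Form.Matrix"
begin

definition obs_mat :: "nat \<Rightarrow> real mat \<Rightarrow> real mat \<Rightarrow> real mat" where
  "obs_mat n A C = mat n n (\<lambda>(k, j). (C * (A ^\<^sub>m k)) $$ (0, j))"

definition observable :: "nat \<Rightarrow> real mat \<Rightarrow> real mat \<Rightarrow> bool" where
  "observable n A C \<longleftrightarrow> vec_space.rank n (obs_mat n A C) = n"

definition sys_mat :: "nat \<Rightarrow> real mat \<Rightarrow> real mat \<Rightarrow> real mat \<Rightarrow> complex \<Rightarrow> complex mat" where
  "sys_mat n A E C z =
     four_block_mat (map_mat complex_of_real A - z \<cdot>\<^sub>m 1\<^sub>m n) (map_mat complex_of_real E)
                    (map_mat complex_of_real C) (0\<^sub>m 1 1)"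

end

theory Submission
  imports Defs "HOL-Computational_Algebra.Fundamental_Theorem_Algebra"
begin


definition ff :: "complex mat \<Rightarrow> complex vec \<Rightarrow> nat \<Rightarrow> complex vec \<Rightarrow> complex" where
  "ff A c j y = c \<bullet> (A ^\<^sub>m j *\<^sub>v y)"

lemma ff_Suc: assumes "A \<in> carrier_mat n n" "y \<in> carrier_vec n"
  shows "ff A c (Suc j) y = ff A c j (A *\<^sub>v y)"
  using assms unfolding ff_def by (simp add: assoc_mult_mat_vec[of _ n n _ n])

lemma ff_lin: assumes A: "A \<in> carrier_mat n n" and c: "c \<in> carrier_vec n"
  and x: "x \<in> carrier_vec n" and e: "e \<in> carrier_vec n"
  shows "ff A c j (A *\<^sub>v x - z \<cdot>\<^sub>v x + w \<cdot>\<^sub>v e) = ff A c (Suc j) x - z * ff A c j x + w * ff A c j e"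
proof -
  have P: "A ^\<^sub>m j \<in> carrier_mat n n" using A by simp
  have Ax: "A *\<^sub>v x \<in> carrier_vec n" using A x by simp
  have zx: "z \<cdot>\<^sub>v x \<in> carrier_vec n" using x by simp
  have we: "w \<cdot>\<^sub>v e \<in> carrier_vec n" using e by simp
  have d: "A *\<^sub>v x - z \<cdot>\<^sub>v x \<in> carrier_vec n" using Ax zx by simp
  have PAx: "A ^\<^sub>m j *\<^sub>v (A *\<^sub>v x) \<in> carrier_vec n" using P Ax by simp
  have Px: "A ^\<^sub>m j *\<^sub>v x \<in> carrier_vec n" using P x by simp
  have Pe: "A ^\<^sub>m j *\<^sub>v e \<in> carrier_vec n" using P e by simp
  have "A ^\<^sub>m j *\<^sub>v (A *\<^sub>v x - z \<cdot>\<^sub>v x + w \<cdot>\<^sub>v e) = A ^\<^sub>m j *\<^sub>v (A *\<^sub>v x - z \<cdot>\<^sub>v x) + A ^\<^sub>m j *\<^sub>v (w \<cdot>\<^sub>v e)"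
    by (rule mult_add_distrib_mat_vec[OF P d we])
  also have "A ^\<^sub>m j *\<^sub>v (A *\<^sub>v x - z \<cdot>\<^sub>v x) = A ^\<^sub>m j *\<^sub>v (A *\<^sub>v x) - A ^\<^sub>m j *\<^sub>v (z \<cdot>\<^sub>v x)"
    by (rule mult_minus_distrib_mat_vec[OF P Ax zx])
  also have "A ^\<^sub>m j *\<^sub>v (z \<cdot>\<^sub>v x) = z \<cdot>\<^sub>v (A ^\<^sub>m j *\<^sub>v x)"
    by (rule mult_mat_vec[OF P x])
  also have "A ^\<^sub>m j *\<^sub>v (w \<cdot>\<^sub>v e) = w \<cdot>\<^sub>v (A ^\<^sub>m j *\<^sub>v e)"
    by (rule mult_mat_vec[OF P e])
  finally have eq: "A ^\<^sub>m j *\<^sub>v (A *\<^sub>v x - z \<cdot>\<^sub>v x + w \<cdot>\<^sub>v e) =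
      A ^\<^sub>m j *\<^sub>v (A *\<^sub>v x) - z \<cdot>\<^sub>v (A ^\<^sub>m j *\<^sub>v x) + w \<cdot>\<^sub>v (A ^\<^sub>m j *\<^sub>v e)" .
  have zPx: "z \<cdot>\<^sub>v (A ^\<^sub>m j *\<^sub>v x) \<in> carrier_vec n" using Px by simp
  have wPe: "w \<cdot>\<^sub>v (A ^\<^sub>m j *\<^sub>v e) \<in> carrier_vec n" using Pe by simp
  have dd: "A ^\<^sub>m j *\<^sub>v (A *\<^sub>v x) - z \<cdot>\<^sub>v (A ^\<^sub>m j *\<^sub>v x) \<in> carrier_vec n" using PAx zPx by simp
  have "ff A c j (A *\<^sub>v x - z \<cdot>\<^sub>v x + w \<cdot>\<^sub>v e) =
      c \<bullet> (A ^\<^sub>m j *\<^sub>v (A *\<^sub>v x) - z \<cdot>\<^sub>v (A ^\<^sub>m j *\<^sub>v x)) + c \<bullet> (w \<cdot>\<^sub>v (A ^\<^sub>m j *\<^sub>v e))"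
    unfolding ff_def eq by (rule scalar_prod_add_distrib[OF c dd wPe])
  also have "c \<bullet> (A ^\<^sub>m j *\<^sub>v (A *\<^sub>v x) - z \<cdot>\<^sub>v (A ^\<^sub>m j *\<^sub>v x)) =
      c \<bullet> (A ^\<^sub>m j *\<^sub>v (A *\<^sub>v x)) - c \<bullet> (z \<cdot>\<^sub>v (A ^\<^sub>m j *\<^sub>v x))"
    by (rule scalar_prod_minus_distrib[OF c PAx zPx])
  also have "c \<bullet> (z \<cdot>\<^sub>v (A ^\<^sub>m j *\<^sub>v x)) = z * ff A c j x"
    unfolding ff_def by (rule scalar_prod_smult_distrib[OF c Px])
  also have "c \<bullet> (w \<cdot>\<^sub>v (A ^\<^sub>m j *\<^sub>v e)) = w * ff A c j e"
    unfolding ff_def by (rule scalar_prod_smult_distrib[OF c Pe])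
  also have "c \<bullet> (A ^\<^sub>m j *\<^sub>v (A *\<^sub>v x)) = ff A c (Suc j) x"
    using ff_Suc[OF A x, of c j] unfolding ff_def by simp
  finally show ?thesis .
qed

lemma ff_0: assumes "A \<in> carrier_mat n n" "y \<in> carrier_vec n"
  shows "ff A c 0 y = c \<bullet> y"
  using assms unfolding ff_def by simp

lemma ff_zero: assumes "A \<in> carrier_mat n n" "c \<in> carrier_vec n"
  shows "ff A c j (0\<^sub>v n) = 0"
proof -
  have "A ^\<^sub>m j *\<^sub>v 0\<^sub>v n = 0\<^sub>v n"
    by (rule eq_vecI, insert assms, auto)
  then show ?thesis using assms unfolding ff_def by simp
qed

lemma dir21:
  assumes A: "A \<in> carrier_mat n n" and c: "c \<in> carrier_vec n" and e: "e \<in> carrier_vec n"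
    and inj: "\<forall>y\<in>carrier_vec n. (\<forall>j<n. ff A c j y = 0) \<longrightarrow> y = 0\<^sub>v n"
    and n: "n \<ge> 1"
    and h0: "\<forall>k<n-1. ff A c k e = 0" and h1: "ff A c (n-1) e \<noteq> 0"
    and x: "x \<in> carrier_vec n" and eq: "A *\<^sub>v x - z \<cdot>\<^sub>v x + w \<cdot>\<^sub>v e = 0\<^sub>v n"
    and cx: "c \<bullet> x = 0"
  shows "x = 0\<^sub>v n \<and> w = 0"
proof -
  have all: "ff A c j x = 0" if "j < n" for j
    using that
  proof (induction j)
    case 0
    then show ?case using ff_0[OF A x] cx by simp
  next
    case (Suc j)
    have "ff A c j (A *\<^sub>v x - z \<cdot>\<^sub>v x + w \<cdot>\<^sub>v e) = 0" using eq ff_zero[OF A c] by simp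
    then have "ff A c (Suc j) x - z * ff A c j x + w * ff A c j e = 0"
      using ff_lin[OF A c x e] by simp
    moreover have "ff A c j x = 0" using Suc by simp
    moreover have "ff A c j e = 0" using h0 Suc by simp
    ultimately show ?case by simp
  qed
  have x0: "x = 0\<^sub>v n" using inj x all by blast
  have "ff A c (n-1) (A *\<^sub>v x - z \<cdot>\<^sub>v x + w \<cdot>\<^sub>v e) = 0" using eq ff_zero[OF A c] by simp
  then have "ff A c (Suc (n-1)) x - z * ff A c (n-1) x + w * ff A c (n-1) e = 0"
    using ff_lin[OF A c x e] by simp
  then have "w * ff A c (n-1) e = 0" using x0 ff_zero[OF A c] by simp
  then have "w = 0" using h1 by simp
  then show ?thesis using x0 by simp
qed

fun Pp :: "(nat \<Rightarrow> complex) \<Rightarrow> nat \<Rightarrow> complex poly" where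
  "Pp a 0 = 0"
| "Pp a (Suc j) = pCons 0 (Pp a j) + [: a j :]"

lemma Pp_props:
  assumes "\<forall>j<k. a j = 0" and "a k = 1"
  shows "(j \<le> k \<longrightarrow> Pp a j = 0) \<and> (k < j \<longrightarrow> coeff (Pp a j) (j-k-1) = 1 \<and> (\<forall>i>j-k-1. coeff (Pp a j) i = 0))"
proof (induction j)
  case 0
  then show ?case by simp
next
  case (Suc j)
  show ?case
  proof (cases "Suc j \<le> k")
    case True
    then show ?thesis using Suc assms by simp
  next
    case False
    show ?thesis
    proof (cases "j = k")
      case True
      then have "Pp a j = 0" using Suc by simp
      then have "Pp a (Suc j) = [:1:]" using True assms by simp
      then show ?thesis using True by (auto simp: coeff_pCons split: nat.splits)
    next
      case False2: False
      then have kj: "k < j" using False by simp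
      have c1: "coeff (Pp a j) (j-k-1) = 1" and c2: "\<forall>i>j-k-1. coeff (Pp a j) i = 0"
        using Suc kj by auto
      have ii: "Suc j - k - 1 = Suc (j-k-1)" using kj by arith
      have "coeff (Pp a (Suc j)) (Suc j - k - 1) = coeff (Pp a j) (j-k-1)"
        unfolding ii by (simp add: coeff_pCons)
      moreover have "coeff (Pp a (Suc j)) i = 0" if "i > Suc j - k - 1" for i
      proof -
        have ti: "i > Suc (j - k - 1)" using that unfolding ii .
        obtain i' where i': "i = Suc i'" using ti by (cases i) auto
        then have "i' > j - k - 1" using ti by simp
        then show ?thesis using c2 i' by (simp add: coeff_pCons)
      qed
      ultimately show ?thesis using c1 kj by simp
    qed
  qed
qed

lemma poly_Pp_Suc: "poly (Pp a (Suc j)) z = z * poly (Pp a j) z + a j"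
  by simp

lemma scalar_mat_vec: assumes "c \<in> carrier_vec nr" "M \<in> carrier_mat nr nc" "v \<in> carrier_vec nc"
  shows "c \<bullet> (M *\<^sub>v v) = (\<Sum>l<nc. (\<Sum>i<nr. c $ i * M $$ (i,l)) * v $ l)"
proof -
  have "c \<bullet> (M *\<^sub>v v) = (\<Sum>i<nr. c $ i * (\<Sum>l<nc. M $$ (i,l) * v $ l))"
    using assms unfolding scalar_prod_def mult_mat_vec_def
    by (auto simp: atLeast0LessThan intro!: sum.cong)
  also have "\<dots> = (\<Sum>i<nr. \<Sum>l<nc. c $ i * M $$ (i,l) * v $ l)"
    by (simp add: sum_distrib_left mult.assoc)
  also have "\<dots> = (\<Sum>l<nc. \<Sum>i<nr. c $ i * M $$ (i,l) * v $ l)"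
    by (rule sum.swap)
  also have "\<dots> = (\<Sum>l<nc. (\<Sum>i<nr. c $ i * M $$ (i,l)) * v $ l)"
    by (simp add: sum_distrib_right)
  finally show ?thesis .
qed



lemma dir12:
  assumes A: "A \<in> carrier_mat n n" and c: "c \<in> carrier_vec n" and e: "e \<in> carrier_vec n"
    and inj: "\<forall>y\<in>carrier_vec n. (\<forall>j<n. ff A c j y = 0) \<longrightarrow> y = 0\<^sub>v n"
    and n: "n \<ge> 1"
    and U: "U \<in> carrier_mat n n"
    and surj: "\<forall>\<xi>\<in>carrier_vec n. \<forall>j<n. ff A c j (U *\<^sub>v \<xi>) = \<xi> $ j"
    and nt: "\<not> ((\<forall>k<n-1. ff A c k e = 0) \<and> ff A c (n-1) e \<noteq> 0)"
  shows "\<exists>z x w. x \<in> carrier_vec n \<and> (x \<noteq> 0\<^sub>v n \<or> w \<noteq> 0) \<and> A *\<^sub>v x - z \<cdot>\<^sub>v x + w \<cdot>\<^sub>v e = 0\<^sub>v n \<and> c \<bullet> x = 0"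
proof (cases "\<forall>k<n. ff A c k e = 0")
  case True
  then have e0: "e = 0\<^sub>v n" using inj e by blast
  have "A *\<^sub>v 0\<^sub>v n = 0\<^sub>v n" by (rule eq_vecI, insert A, auto)
  then have "A *\<^sub>v 0\<^sub>v n - 0 \<cdot>\<^sub>v 0\<^sub>v n + 1 \<cdot>\<^sub>v e = 0\<^sub>v n" unfolding e0
    by (intro eq_vecI) auto
  moreover have "c \<bullet> 0\<^sub>v n = 0" using c by simp
  ultimately show ?thesis by (intro exI[of _ 0] exI[of _ "0\<^sub>v n"] exI[of _ 1]) auto
next
  case False
  then obtain k0 where k0: "k0 < n" "ff A c k0 e \<noteq> 0" by auto
  define k where "k = (LEAST k. ff A c k e \<noteq> 0)"
  have gk: "ff A c k e \<noteq> 0" unfolding k_def by (rule LeastI[of _ k0], rule k0(2))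
  have bel: "\<forall>j<k. ff A c j e = 0" unfolding k_def using not_less_Least by blast
  have "k \<le> k0" unfolding k_def by (rule Least_le, rule k0(2))
  then have "k < n" using k0 by simp
  moreover have "k \<noteq> n - 1"
  proof
    assume "k = n - 1"
    then show False using nt bel gk by auto
  qed
  ultimately have kn: "k < n - 1" by simp
  define \<gamma> where "\<gamma> = ff A c k e"
  define a where "a = (\<lambda>j. ff A c j e / \<gamma>)"
  have a0: "\<forall>j<k. a j = 0" using bel unfolding a_def by simp
  have a1: "a k = 1" using gk unfolding a_def \<gamma>_def by simp
  note PP = Pp_props[OF a0 a1]
  define b where "b = (\<lambda>l. \<Sum>i<n. c $ i * (A ^\<^sub>m n * U) $$ (i,l))"
  define R where "R = (\<Sum>l<n. smult (b l) (Pp a l)) - pCons 0 (Pp a (n-1)) - [: a (n-1) :]"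
  define m where "m = n - k - 1"
  have m1: "m = Suc (n - 1 - k - 1)" unfolding m_def using kn by arith
  have cs: "coeff (\<Sum>l<n. smult (b l) (Pp a l)) m = 0"
  proof -
    have "coeff (smult (b l) (Pp a l)) m = 0" if "l < n" for l
    proof (cases "l \<le> k")
      case True
      then show ?thesis using PP[of l] by simp
    next
      case False
      then have "m > l - k - 1" unfolding m_def using that by arith
      then show ?thesis using PP[of l] False by simp
    qed
    then show ?thesis by (auto simp: coeff_sum intro!: sum.neutral)
  qed
  have cp: "coeff (pCons 0 (Pp a (n-1))) m = 1"
    unfolding m1 using PP[of "n-1"] kn by (simp add: coeff_pCons)
  have cc: "coeff [: a (n-1) :] m = 0" unfolding m1 by simp
  have cR: "coeff R m = -1" unfolding R_def using cs cp cc by simp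
  have "\<not> (\<exists>a l. a \<noteq> 0 \<and> l = 0 \<and> R = pCons a l)"
  proof
    assume "\<exists>a l. a \<noteq> 0 \<and> l = 0 \<and> R = pCons a l"
    then obtain a' where "R = pCons a' 0" by blast
    then have "coeff R m = 0" unfolding m1 by simp
    then show False using cR by simp
  qed
  then obtain z where z: "poly R z = 0" using fundamental_theorem_of_algebra_alt by blast
  define \<xi> where "\<xi> = vec n (\<lambda>j. poly (Pp a j) z)"
  have \<xi>c: "\<xi> \<in> carrier_vec n" unfolding \<xi>_def by simp
  define x where "x = U *\<^sub>v \<xi>"
  have xc: "x \<in> carrier_vec n" unfolding x_def using U \<xi>c by simp
  define w where "w = - 1 / \<gamma>"
  have w0: "w \<noteq> 0" unfolding w_def \<gamma>_def using gk by simp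
  have fx: "ff A c j x = poly (Pp a j) z" if "j < n" for j
    using surj \<xi>c that unfolding x_def \<xi>_def by simp
  have AU: "A ^\<^sub>m n * U \<in> carrier_mat n n" using A U by auto
  have ffn: "ff A c n x = (\<Sum>l<n. b l * poly (Pp a l) z)"
  proof -
    have "ff A c n x = c \<bullet> ((A ^\<^sub>m n * U) *\<^sub>v \<xi>)"
      unfolding ff_def x_def using A U \<xi>c by (simp add: assoc_mult_mat_vec[of _ n n _ n])
    also have "\<dots> = (\<Sum>l<n. b l * \<xi> $ l)"
      unfolding b_def by (rule scalar_mat_vec[OF c AU \<xi>c])
    also have "\<dots> = (\<Sum>l<n. b l * poly (Pp a l) z)"
      unfolding \<xi>_def by (rule sum.cong, auto)
    finally show ?thesis .
  qed
  have pR: "poly R z = (\<Sum>l<n. b l * poly (Pp a l) z) - z * poly (Pp a (n-1)) z - a (n-1)"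
    unfolding R_def by (simp add: poly_sum)
  define y where "y = A *\<^sub>v x - z \<cdot>\<^sub>v x + w \<cdot>\<^sub>v e"
  have yc: "y \<in> carrier_vec n" unfolding y_def using A xc e by simp
  have "ff A c j y = 0" if "j < n" for j
  proof -
    have "ff A c j y = ff A c (Suc j) x - z * ff A c j x + w * ff A c j e"
      unfolding y_def by (rule ff_lin[OF A c xc e])
    also have "w * ff A c j e = - a j" unfolding w_def a_def by simp
    also have "ff A c j x = poly (Pp a j) z" using fx that by simp
    finally have eqy: "ff A c j y = ff A c (Suc j) x - z * poly (Pp a j) z + - a j" .
    show ?thesis
    proof (cases "Suc j < n")
      case True
      then show ?thesis using eqy fx[OF True] by simp
    next
      case False
      then have "Suc j = n" using that by simp
      then have "j = n - 1" by simp
      then show ?thesis using eqy ffn pR z \<open>Suc j = n\<close> by simp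
    qed
  qed
  then have y0: "y = 0\<^sub>v n" using inj yc by blast
  have "c \<bullet> x = 0" using ff_0[OF A xc, of c] fx[of 0] n by simp
  then show ?thesis using xc w0 y0 unfolding y_def by blast
qed



lemma entry_CBE: fixes Cm :: "'a::comm_ring_1 mat"
  assumes "Cm \<in> carrier_mat 1 n" "B \<in> carrier_mat n n" "Em \<in> carrier_mat n 1"
  shows "(Cm * B * Em) $$ (0,0) = row Cm 0 \<bullet> (B *\<^sub>v col Em 0)"
proof -
  have "(Cm * B * Em) $$ (0,0) = (Cm * (B * Em)) $$ (0,0)" using assms by simp
  also have "\<dots> = row Cm 0 \<bullet> col (B * Em) 0" using assms by (simp del: col_mult2)
  also have "col (B * Em) 0 = B *\<^sub>v col Em 0" by (rule col_mult2[OF assms(2) assms(3)], simp)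
  finally show ?thesis .
qed

lemma zero11_iff: "M \<in> carrier_mat 1 1 \<Longrightarrow> M = 0\<^sub>m 1 1 \<longleftrightarrow> M $$ (0,0) = 0"
  by (auto simp: mat_eq_iff)

lemma block_eq:
  fixes Ac :: "complex mat"
  assumes A: "Ac \<in> carrier_mat n n" and E: "Ec \<in> carrier_mat n 1" and C: "Cc \<in> carrier_mat 1 n"
    and x: "x \<in> carrier_vec n" and d: "d \<in> carrier_vec 1"
  shows "four_block_mat (Ac - z \<cdot>\<^sub>m 1\<^sub>m n) Ec Cc (0\<^sub>m 1 1) *\<^sub>v (x @\<^sub>v d)
     = (Ac *\<^sub>v x - z \<cdot>\<^sub>v x + (d $ 0) \<cdot>\<^sub>v col Ec 0) @\<^sub>v vec 1 (\<lambda>_. row Cc 0 \<bullet> x)"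
proof -
  have Z: "Ac - z \<cdot>\<^sub>m 1\<^sub>m n \<in> carrier_mat n n" by (rule minus_carrier_mat, simp)
  have "four_block_mat (Ac - z \<cdot>\<^sub>m 1\<^sub>m n) Ec Cc (0\<^sub>m 1 1) *\<^sub>v (x @\<^sub>v d)
     = ((Ac - z \<cdot>\<^sub>m 1\<^sub>m n) *\<^sub>v x + Ec *\<^sub>v d) @\<^sub>v (Cc *\<^sub>v x + 0\<^sub>m 1 1 *\<^sub>v d)"
    by (rule four_block_mat_mult_vec[OF Z E C _ x d], simp)
  also have "(Ac - z \<cdot>\<^sub>m 1\<^sub>m n) *\<^sub>v x = Ac *\<^sub>v x - (z \<cdot>\<^sub>m 1\<^sub>m n) *\<^sub>v x"
    using A x by (simp add: minus_mult_distrib_mat_vec[of _ n n])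
  also have "(z \<cdot>\<^sub>m 1\<^sub>m n) *\<^sub>v x = z \<cdot>\<^sub>v x"
    by (rule eq_vecI, insert x, auto)
  also have "Ec *\<^sub>v d = (d $ 0) \<cdot>\<^sub>v col Ec 0"
    by (rule eq_vecI, insert E d, auto simp: scalar_prod_def)
  also have "Cc *\<^sub>v x + 0\<^sub>m 1 1 *\<^sub>v d = vec 1 (\<lambda>_. row Cc 0 \<bullet> x)"
    by (rule eq_vecI, insert C d x, auto)
  finally show ?thesis .
qed



lemma zero_app: "0\<^sub>v (n + m) = (0\<^sub>v n :: 'a::zero vec) @\<^sub>v 0\<^sub>v m"
  by (rule eq_vecI, auto)

lemma sing_iff:
  fixes Ac :: "complex mat"
  assumes A: "Ac \<in> carrier_mat n n" and E: "Ec \<in> carrier_mat n 1" and C: "Cc \<in> carrier_mat 1 n"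
  shows "(\<exists>v. v \<in> carrier_vec (n+1) \<and> v \<noteq> 0\<^sub>v (n+1) \<and>
            four_block_mat (Ac - z \<cdot>\<^sub>m 1\<^sub>m n) Ec Cc (0\<^sub>m 1 1) *\<^sub>v v = 0\<^sub>v (n+1))
    \<longleftrightarrow> (\<exists>x w. x \<in> carrier_vec n \<and> (x \<noteq> 0\<^sub>v n \<or> w \<noteq> 0) \<and>
            Ac *\<^sub>v x - z \<cdot>\<^sub>v x + w \<cdot>\<^sub>v col Ec 0 = 0\<^sub>v n \<and> row Cc 0 \<bullet> x = 0)"
  (is "?L \<longleftrightarrow> ?R")
proof
  assume ?L
  then obtain v where v: "v \<in> carrier_vec (n+1)" "v \<noteq> 0\<^sub>v (n+1)"
    "four_block_mat (Ac - z \<cdot>\<^sub>m 1\<^sub>m n) Ec Cc (0\<^sub>m 1 1) *\<^sub>v v = 0\<^sub>v (n+1)" by blast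
  define x where "x = vec_first v n"
  define d where "d = vec_last v 1"
  have xc: "x \<in> carrier_vec n" unfolding x_def by (rule vec_first_carrier)
  have dc: "d \<in> carrier_vec 1" unfolding d_def by (rule vec_last_carrier)
  have vxd: "v = x @\<^sub>v d" unfolding x_def d_def using v(1) by simp
  have ec: "col Ec 0 \<in> carrier_vec n" by (rule col_carrier_vec[OF _ E], simp)
  have xE: "Ac *\<^sub>v x - z \<cdot>\<^sub>v x + (d $ 0) \<cdot>\<^sub>v col Ec 0 \<in> carrier_vec n" using A ec xc by simp
  have h: "four_block_mat (Ac - z \<cdot>\<^sub>m 1\<^sub>m n) Ec Cc (0\<^sub>m 1 1) *\<^sub>v (x @\<^sub>v d) = 0\<^sub>v (n+1)"
    using v(3) vxd by simp
  have "(Ac *\<^sub>v x - z \<cdot>\<^sub>v x + (d $ 0) \<cdot>\<^sub>v col Ec 0) @\<^sub>v vec 1 (\<lambda>_. row Cc 0 \<bullet> x) = 0\<^sub>v n @\<^sub>v 0\<^sub>v 1"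
    using h unfolding block_eq[OF A E C xc dc, of z] zero_app[of n 1] .
  then have e1: "Ac *\<^sub>v x - z \<cdot>\<^sub>v x + (d $ 0) \<cdot>\<^sub>v col Ec 0 = 0\<^sub>v n"
    and e2: "vec 1 (\<lambda>_. row Cc 0 \<bullet> x) = 0\<^sub>v 1"
    using append_vec_eq[OF xE, of "0\<^sub>v n"] by auto
  have e3: "row Cc 0 \<bullet> x = 0" using arg_cong[OF e2, of "\<lambda>u. u $ 0"] by simp
  have "x \<noteq> 0\<^sub>v n \<or> d $ 0 \<noteq> 0"
  proof (rule ccontr)
    assume "\<not> (x \<noteq> 0\<^sub>v n \<or> d $ 0 \<noteq> 0)"
    then have "x = 0\<^sub>v n" "d = 0\<^sub>v 1" using dc by (auto intro!: eq_vecI)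
    then have "v = 0\<^sub>v n @\<^sub>v 0\<^sub>v 1" using vxd by simp
    then have "v = 0\<^sub>v (n+1)" unfolding zero_app[of n 1] .
    then show False using v(2) by simp
  qed
  then show ?R using xc e1 e3 by (intro exI[of _ x] exI[of _ "d $ 0"]) simp
next
  assume ?R
  then obtain x w where xw: "x \<in> carrier_vec n" "x \<noteq> 0\<^sub>v n \<or> w \<noteq> 0"
    "Ac *\<^sub>v x - z \<cdot>\<^sub>v x + w \<cdot>\<^sub>v col Ec 0 = 0\<^sub>v n" "row Cc 0 \<bullet> x = 0" by blast
  define d where "d = vec 1 (\<lambda>_. w)"
  have dc: "d \<in> carrier_vec 1" unfolding d_def by simp
  have d0: "d $ 0 = w" unfolding d_def by simp
  have v1: "x @\<^sub>v d \<in> carrier_vec (n+1)" using append_carrier_vec[OF xw(1) dc] .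
  have v1eq: "vec 1 (\<lambda>_. row Cc 0 \<bullet> x) = 0\<^sub>v 1" using xw(4) by (auto intro!: eq_vecI)
  have v3: "four_block_mat (Ac - z \<cdot>\<^sub>m 1\<^sub>m n) Ec Cc (0\<^sub>m 1 1) *\<^sub>v (x @\<^sub>v d) = 0\<^sub>v (n+1)"
    unfolding block_eq[OF A E C xw(1) dc, of z] d0 xw(3) v1eq zero_app[of n 1] ..
  have v2: "x @\<^sub>v d \<noteq> 0\<^sub>v (n+1)"
  proof
    assume "x @\<^sub>v d = 0\<^sub>v (n+1)"
    then have "x @\<^sub>v d = 0\<^sub>v n @\<^sub>v 0\<^sub>v 1" unfolding zero_app[of n 1] .
    then have "x = 0\<^sub>v n" "d = 0\<^sub>v 1" using append_vec_eq[OF xw(1), of "0\<^sub>v n"] by auto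
    then show False using xw(2) d0 by auto
  qed
  show ?L using v1 v2 v3 by blast
qed



theorem lemma1:
  fixes n :: nat and A0 E0 C0 :: "real mat"
  assumes "n \<ge> 1"
    and "A0 \<in> carrier_mat n n" and "E0 \<in> carrier_mat n 1" and "C0 \<in> carrier_mat 1 n"
    and "observable n A0 C0"
  shows "(\<forall>z::complex. vec_space.rank (n + 1) (sys_mat n A0 E0 C0 z) = n + 1)
     \<longleftrightarrow> ((\<forall>k < n - 1. C0 * (A0 ^\<^sub>m k) * E0 = 0\<^sub>m 1 1) \<and> C0 * (A0 ^\<^sub>m (n - 1)) * E0 \<noteq> 0\<^sub>m 1 1)"
proof -
  note A0 = assms(2) and E0 = assms(3) and C0 = assms(4)
  define Ac where "Ac = map_mat complex_of_real A0"
  define Ec where "Ec = map_mat complex_of_real E0"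
  define Cc where "Cc = map_mat complex_of_real C0"
  have A: "Ac \<in> carrier_mat n n" unfolding Ac_def using A0 by simp
  have E: "Ec \<in> carrier_mat n 1" unfolding Ec_def using E0 by simp
  have C: "Cc \<in> carrier_mat 1 n" unfolding Cc_def using C0 by simp
  define c where "c = row Cc 0"
  define e where "e = col Ec 0"
  have c: "c \<in> carrier_vec n" unfolding c_def by (rule row_carrier_vec[OF _ C], simp)
  have e: "e \<in> carrier_vec n" unfolding e_def by (rule col_carrier_vec[OF _ E], simp)
  have hom1: "map_mat complex_of_real (C0 * A0 ^\<^sub>m k) = Cc * Ac ^\<^sub>m k" for k
  proof -
    have "map_mat complex_of_real (C0 * A0 ^\<^sub>m k) = map_mat complex_of_real C0 * map_mat complex_of_real (A0 ^\<^sub>m k)"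
      by (rule of_real_hom.mat_hom_mult[OF C0 pow_carrier_mat[OF A0]])
    also have "map_mat complex_of_real (A0 ^\<^sub>m k) = (map_mat complex_of_real A0) ^\<^sub>m k"
      by (rule of_real_hom.mat_hom_pow[OF A0])
    finally show ?thesis unfolding Cc_def Ac_def .
  qed
  have hom2: "map_mat complex_of_real (C0 * A0 ^\<^sub>m k * E0) = Cc * Ac ^\<^sub>m k * Ec" for k
    unfolding hom1[symmetric] Ec_def
    by (rule of_real_hom.mat_hom_mult[OF _ E0], insert C0 A0, auto)
  have key1: "C0 * A0 ^\<^sub>m k * E0 = 0\<^sub>m 1 1 \<longleftrightarrow> ff Ac c k e = 0" for k
  proof -
    have cr: "C0 * A0 ^\<^sub>m k * E0 \<in> carrier_mat 1 1" using C0 A0 E0 by auto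
    have "C0 * A0 ^\<^sub>m k * E0 = 0\<^sub>m 1 1 \<longleftrightarrow> (C0 * A0 ^\<^sub>m k * E0) $$ (0,0) = 0"
      by (rule zero11_iff[OF cr])
    also have "\<dots> \<longleftrightarrow> complex_of_real ((C0 * A0 ^\<^sub>m k * E0) $$ (0,0)) = 0" by simp
    also have "complex_of_real ((C0 * A0 ^\<^sub>m k * E0) $$ (0,0)) = (Cc * Ac ^\<^sub>m k * Ec) $$ (0,0)"
      unfolding hom2[symmetric] by (rule index_map_mat(1)[symmetric], insert cr, auto)
    also have "\<dots> = ff Ac c k e" unfolding ff_def c_def e_def
      by (rule entry_CBE[OF C _ E], insert A, simp)
    finally show ?thesis .
  qed
  define T where "T = obs_mat n A0 C0"
  have T: "T \<in> carrier_mat n n" unfolding T_def obs_mat_def by simp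
  have detT: "det T \<noteq> 0" using vec_space.det_rank_iff[OF T] assms(5)
    unfolding observable_def T_def by simp
  define Tc where "Tc = map_mat complex_of_real T"
  have Tc: "Tc \<in> carrier_mat n n" unfolding Tc_def using T by simp
  have detTc: "det Tc \<noteq> 0" unfolding Tc_def using detT by simp
  have Tcv: "(Tc *\<^sub>v y) $ j = ff Ac c j y" if y: "y \<in> carrier_vec n" and j: "j < n" for y j
  proof -
    have "row Tc j = row (Cc * Ac ^\<^sub>m j) 0"
    proof (rule eq_vecI)
      fix i assume "i < dim_vec (row (Cc * Ac ^\<^sub>m j) 0)"
      then have i: "i < n" using C A by (auto split: if_splits)
      have "row Tc j $ i = complex_of_real ((C0 * A0 ^\<^sub>m j) $$ (0, i))"
        unfolding Tc_def T_def obs_mat_def using i j by simp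
      also have "\<dots> = (map_mat complex_of_real (C0 * A0 ^\<^sub>m j)) $$ (0, i)"
        using i C0 A0 by simp
      also have "\<dots> = row (Cc * Ac ^\<^sub>m j) 0 $ i" unfolding hom1 using i C A by simp
      finally show "row Tc j $ i = row (Cc * Ac ^\<^sub>m j) 0 $ i" .
    qed (insert Tc C A, simp)
    then have "(Tc *\<^sub>v y) $ j = row (Cc * Ac ^\<^sub>m j) 0 \<bullet> y" using Tc j by simp
    also have "\<dots> = ((Cc * Ac ^\<^sub>m j) *\<^sub>v y) $ 0" using C A by simp
    also have "\<dots> = (Cc *\<^sub>v (Ac ^\<^sub>m j *\<^sub>v y)) $ 0" using C A y
      by (simp add: assoc_mult_mat_vec[of _ 1 n _ n])
    also have "\<dots> = ff Ac c j y" unfolding ff_def c_def using C by simp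
    finally show ?thesis .
  qed
  have inj: "\<forall>y\<in>carrier_vec n. (\<forall>j<n. ff Ac c j y = 0) \<longrightarrow> y = 0\<^sub>v n"
  proof (intro ballI impI)
    fix y :: "complex vec" assume y: "y \<in> carrier_vec n" and h: "\<forall>j<n. ff Ac c j y = 0"
    have "Tc *\<^sub>v y = 0\<^sub>v n" by (rule eq_vecI, insert Tc h Tcv[OF y], auto)
    then show "y = 0\<^sub>v n" using det_0_iff_vec_prod_zero_field[OF Tc] detTc y by blast
  qed
  define U where "U = (1 / det Tc) \<cdot>\<^sub>m adj_mat Tc"
  have U: "U \<in> carrier_mat n n" unfolding U_def using adj_mat(1)[OF Tc] by simp
  have TU: "Tc * U = 1\<^sub>m n"
  proof -
    have "Tc * U = (1 / det Tc) \<cdot>\<^sub>m (Tc * adj_mat Tc)"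
      unfolding U_def by (rule mult_smult_distrib[OF Tc adj_mat(1)[OF Tc]])
    also have "\<dots> = (1 / det Tc) \<cdot>\<^sub>m (det Tc \<cdot>\<^sub>m 1\<^sub>m n)" using adj_mat(2)[OF Tc] by simp
    also have "\<dots> = 1\<^sub>m n" using detTc by (intro eq_matI) auto
    finally show ?thesis .
  qed
  have surj: "\<forall>\<xi>\<in>carrier_vec n. \<forall>j<n. ff Ac c j (U *\<^sub>v \<xi>) = \<xi> $ j"
  proof (intro ballI allI impI)
    fix \<xi> :: "complex vec" and j assume xi: "\<xi> \<in> carrier_vec n" and j: "j < n"
    have "ff Ac c j (U *\<^sub>v \<xi>) = (Tc *\<^sub>v (U *\<^sub>v \<xi>)) $ j" using Tcv[OF _ j, of "U *\<^sub>v \<xi>"] U xi by simp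
    also have "\<dots> = ((Tc * U) *\<^sub>v \<xi>) $ j" using Tc U xi by (simp add: assoc_mult_mat_vec[of _ n n _ n])
    also have "\<dots> = \<xi> $ j" unfolding TU using xi j by simp
    finally show "ff Ac c j (U *\<^sub>v \<xi>) = \<xi> $ j" .
  qed
  let ?sing = "\<lambda>z. \<exists>x w. x \<in> carrier_vec n \<and> (x \<noteq> 0\<^sub>v n \<or> w \<noteq> 0) \<and>
            Ac *\<^sub>v x - z \<cdot>\<^sub>v x + w \<cdot>\<^sub>v e = 0\<^sub>v n \<and> c \<bullet> x = 0"
  have rank_iff: "vec_space.rank (n + 1) (sys_mat n A0 E0 C0 z) = n + 1 \<longleftrightarrow> \<not> ?sing z" for z
  proof -
    have sm: "sys_mat n A0 E0 C0 z = four_block_mat (Ac - z \<cdot>\<^sub>m 1\<^sub>m n) Ec Cc (0\<^sub>m 1 1)"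
      unfolding sys_mat_def Ac_def Ec_def Cc_def by simp
    have M: "four_block_mat (Ac - z \<cdot>\<^sub>m 1\<^sub>m n) Ec Cc (0\<^sub>m 1 1) \<in> carrier_mat (n+1) (n+1)"
      by (rule four_block_carrier_mat, rule minus_carrier_mat, simp, simp)
    show ?thesis unfolding sm
      using vec_space.det_rank_iff[OF M] det_0_iff_vec_prod_zero_field[OF M] sing_iff[OF A E C, of z]
      unfolding c_def e_def by blast
  qed
  have RHS: "((\<forall>k < n - 1. C0 * (A0 ^\<^sub>m k) * E0 = 0\<^sub>m 1 1) \<and> C0 * (A0 ^\<^sub>m (n - 1)) * E0 \<noteq> 0\<^sub>m 1 1)
      \<longleftrightarrow> ((\<forall>k<n-1. ff Ac c k e = 0) \<and> ff Ac c (n-1) e \<noteq> 0)"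
    using key1 by simp
  show ?thesis unfolding RHS
  proof
    assume L: "\<forall>z::complex. vec_space.rank (n + 1) (sys_mat n A0 E0 C0 z) = n + 1"
    show "(\<forall>k<n-1. ff Ac c k e = 0) \<and> ff Ac c (n-1) e \<noteq> 0"
    proof (rule ccontr)
      assume "\<not> ((\<forall>k<n-1. ff Ac c k e = 0) \<and> ff Ac c (n-1) e \<noteq> 0)"
      then obtain z where "?sing z" using dir12[OF A c e inj assms(1) U surj] by blast
      then show False using L rank_iff by blast
    qed
  next
    assume R: "(\<forall>k<n-1. ff Ac c k e = 0) \<and> ff Ac c (n-1) e \<noteq> 0"
    show "\<forall>z::complex. vec_space.rank (n + 1) (sys_mat n A0 E0 C0 z) = n + 1"
    proof
      fix z :: complex
      have "\<not> ?sing z"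
      proof
        assume "?sing z"
        then obtain x w where xw: "x \<in> carrier_vec n" "x \<noteq> 0\<^sub>v n \<or> w \<noteq> 0"
          "Ac *\<^sub>v x - z \<cdot>\<^sub>v x + w \<cdot>\<^sub>v e = 0\<^sub>v n" "c \<bullet> x = 0" by blast
        have "x = 0\<^sub>v n \<and> w = 0"
          using dir21[OF A c e inj assms(1) _ _ xw(1) xw(3) xw(4)] R by blast
        then show False using xw(2) by blast
      qed
      then show "vec_space.rank (n + 1) (sys_mat n A0 E0 C0 z) = n + 1" using rank_iff by blast
    qed
  qed
qed

end
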